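(* Let $K$ be a division ring, $R=K[t;\sigma,\delta]$, and let $f,f',g\in R$ be such that $h+Rf'\mapsto hg+Rf$ is a well-defined isomorphism of left $R$-modules $R/Rf'\to R/Rf$. Then $g(x)\neq0$ for every $x\in V(f)$, and $V(f')=\{\phi_g(x)\mid x\in V(f)\}$.
   Context: $K$ is a division ring, $\sigma$ a ring endomorphism of $K$, $\delta$ a $\sigma$-derivation ($\delta$ additive, $\delta(ab)=\sigma(a)\delta(b)+\delta(a)b$); $R=K[t;\sigma,\delta]$ is the Ore extension with $ta=\sigma(a)t+\delta(a)$. For $h\in R$ and $x\in K$, $h(x)$ is the unique element of $K$ with $h-h(x)\in R(t-x)$, and $V(h)=\{x\in K\mid h(x)=0\}$ is the set of right roots of $h$. For $0\ne y\in K$, $x^y:=\sigma(y)xy^{-1}+\delta(y)y^{-1}$, and for $x\notin V(g)$, $\phi_g(x):=x^{g(x)}$. *)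

theory Defs
  imports "HOL-Computational_Algebra.Polynomial"
begin

text \<open>Elements of the Ore extension R = K[t; sigma, delta] are represented by their
  left coefficient sequences: the polynomial p represents the sum over i of (coeff p i) t^i.\<close>

definition ring_endo :: "('a::division_ring \<Rightarrow> 'a) \<Rightarrow> bool" where
  "ring_endo \<sigma> \<longleftrightarrow> (\<forall>a b. \<sigma> (a + b) = \<sigma> a + \<sigma> b) \<and> (\<forall>a b. \<sigma> (a * b) = \<sigma> a * \<sigma> b) \<and> \<sigma> 1 = 1"

definition sigma_derivation :: "('a::division_ring \<Rightarrow> 'a) \<Rightarrow> ('a \<Rightarrow> 'a) \<Rightarrow> bool" where
  "sigma_derivation \<sigma> \<delta> \<longleftrightarrow> (\<forall>a b. \<delta> (a + b) = \<delta> a + \<delta> b) \<and>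
      (\<forall>a b. \<delta> (a * b) = \<sigma> a * \<delta> b + \<delta> a * b)"

text \<open>Left multiplication by t: t * (sum a_i t^i) = sum (sigma(a_i) t^(i+1) + delta(a_i) t^i).\<close>
definition ore_tmul :: "('a::division_ring \<Rightarrow> 'a) \<Rightarrow> ('a \<Rightarrow> 'a) \<Rightarrow> 'a poly \<Rightarrow> 'a poly" where
  "ore_tmul \<sigma> \<delta> q = pCons 0 (map_poly \<sigma> q) + map_poly \<delta> q"

definition ore_lscale :: "'a::division_ring \<Rightarrow> 'a poly \<Rightarrow> 'a poly" where
  "ore_lscale a q = map_poly (\<lambda>c. a * c) q"

definition ore_mult :: "('a::division_ring \<Rightarrow> 'a) \<Rightarrow> ('a \<Rightarrow> 'a) \<Rightarrow> 'a poly \<Rightarrow> 'a poly \<Rightarrow> 'a poly" where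
  "ore_mult \<sigma> \<delta> p q = (\<Sum>i\<le>degree p. ore_lscale (coeff p i) ((ore_tmul \<sigma> \<delta> ^^ i) q))"

definition left_ideal :: "('a::division_ring \<Rightarrow> 'a) \<Rightarrow> ('a \<Rightarrow> 'a) \<Rightarrow> 'a poly \<Rightarrow> 'a poly set" where
  "left_ideal \<sigma> \<delta> h = {ore_mult \<sigma> \<delta> r h | r. True}"

definition coset :: "'a::division_ring poly \<Rightarrow> 'a poly set \<Rightarrow> 'a poly set" where
  "coset h I = {h + r | r. r \<in> I}"

definition ore_eval :: "('a::division_ring \<Rightarrow> 'a) \<Rightarrow> ('a \<Rightarrow> 'a) \<Rightarrow> 'a poly \<Rightarrow> 'a \<Rightarrow> 'a" where
  "ore_eval \<sigma> \<delta> h x = (THE y. h - [:y:] \<in> left_ideal \<sigma> \<delta> [:- x, 1:])"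

definition right_roots :: "('a::division_ring \<Rightarrow> 'a) \<Rightarrow> ('a \<Rightarrow> 'a) \<Rightarrow> 'a poly \<Rightarrow> 'a set" where
  "right_roots \<sigma> \<delta> h = {x. ore_eval \<sigma> \<delta> h x = 0}"

definition ore_conj :: "('a::division_ring \<Rightarrow> 'a) \<Rightarrow> ('a \<Rightarrow> 'a) \<Rightarrow> 'a \<Rightarrow> 'a \<Rightarrow> 'a" where
  "ore_conj \<sigma> \<delta> x y = \<sigma> y * x * inverse y + \<delta> y * inverse y"

definition ore_phi :: "('a::division_ring \<Rightarrow> 'a) \<Rightarrow> ('a \<Rightarrow> 'a) \<Rightarrow> 'a poly \<Rightarrow> 'a \<Rightarrow> 'a" where
  "ore_phi \<sigma> \<delta> g x = ore_conj \<sigma> \<delta> x (ore_eval \<sigma> \<delta> g x)"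

text \<open>h + R f' \<mapsto> h g + R f is a well-defined bijection R/Rf' \<rightarrow> R/Rf
  (left R-linearity is then automatic, as it is induced by right multiplication by g).\<close>
definition induced_iso :: "('a::division_ring \<Rightarrow> 'a) \<Rightarrow> ('a \<Rightarrow> 'a) \<Rightarrow> 'a poly \<Rightarrow> 'a poly \<Rightarrow> 'a poly \<Rightarrow> bool" where
  "induced_iso \<sigma> \<delta> f f' g \<longleftrightarrow>
     (\<forall>h1 h2. coset h1 (left_ideal \<sigma> \<delta> f') = coset h2 (left_ideal \<sigma> \<delta> f') \<longrightarrow>
        coset (ore_mult \<sigma> \<delta> h1 g) (left_ideal \<sigma> \<delta> f) = coset (ore_mult \<sigma> \<delta> h2 g) (left_ideal \<sigma> \<delta> f)) \<and>
     (\<forall>h1 h2. coset (ore_mult \<sigma> \<delta> h1 g) (left_ideal \<sigma> \<delta> f) = coset (ore_mult \<sigma> \<delta> h2 g) (left_ideal \<sigma> \<delta> f) \<longrightarrow>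
        coset h1 (left_ideal \<sigma> \<delta> f') = coset h2 (left_ideal \<sigma> \<delta> f')) \<and>
     (\<forall>k. \<exists>h. coset (ore_mult \<sigma> \<delta> h g) (left_ideal \<sigma> \<delta> f) = coset k (left_ideal \<sigma> \<delta> f))"

end

theory Submission imports Defs begin

locale ore =
  fixes \<sigma> \<delta> :: "'a::division_ring \<Rightarrow> 'a"
  assumes re: "ring_endo \<sigma>" and sd: "sigma_derivation \<sigma> \<delta>"
begin

abbreviation T where "T \<equiv> ore_tmul \<sigma> \<delta>"
abbreviation M where "M \<equiv> ore_mult \<sigma> \<delta>"
abbreviation LI where "LI \<equiv> left_ideal \<sigma> \<delta>"
abbreviation L where "L \<equiv> ore_lscale"

lemma s_add: "\<sigma> (a + b) = \<sigma> a + \<sigma> b" using re unfolding ring_endo_def by blast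
lemma s_mult: "\<sigma> (a * b) = \<sigma> a * \<sigma> b" using re unfolding ring_endo_def by blast
lemma s_1: "\<sigma> 1 = 1" using re unfolding ring_endo_def by blast
lemma d_add: "\<delta> (a + b) = \<delta> a + \<delta> b" using sd unfolding sigma_derivation_def by blast
lemma d_mult: "\<delta> (a * b) = \<sigma> a * \<delta> b + \<delta> a * b" using sd unfolding sigma_derivation_def by blast
lemma s_0[simp]: "\<sigma> 0 = 0" using s_add[of 0 0] by simp
lemma d_0[simp]: "\<delta> 0 = 0" using d_add[of 0 0] by simp
lemma d_1: "\<delta> 1 = 0" using d_mult[of 1 1] s_1 by simp

lemma coeff_L: "coeff (L a q) n = a * coeff q n"
  unfolding ore_lscale_def by (simp add: coeff_map_poly)

lemma coeff_T: "coeff (T q) n = (case n of 0 \<Rightarrow> 0 | Suc m \<Rightarrow> \<sigma> (coeff q m)) + \<delta> (coeff q n)"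
  unfolding ore_tmul_def by (simp add: coeff_map_poly coeff_pCons split: nat.split)

lemma T_add: "T (p + q) = T p + T q"
  by (rule poly_eqI) (auto simp: coeff_T s_add d_add split: nat.split)
lemma T_0[simp]: "T 0 = 0"
  by (rule poly_eqI) (auto simp: coeff_T split: nat.split)
lemma Ti_add: "(T^^i) (p + q) = (T^^i) p + (T^^i) q"
  by (induction i) (auto simp: T_add)
lemma Ti_0[simp]: "(T^^i) 0 = 0"
  by (induction i) auto

lemma L_add: "L a (p + q) = L a p + L a q"
  by (rule poly_eqI) (simp add: coeff_L distrib_left)
lemma L_add_left: "L (a + b) p = L a p + L b p"
  by (rule poly_eqI) (simp add: coeff_L distrib_right)
lemma L_0[simp]: "L a 0 = 0" by (rule poly_eqI) (simp add: coeff_L)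
lemma L_0_left[simp]: "L 0 p = 0" by (rule poly_eqI) (simp add: coeff_L)
lemma L_1[simp]: "L 1 p = p" by (rule poly_eqI) (simp add: coeff_L)
lemma L_L: "L a (L b p) = L (a * b) p" by (rule poly_eqI) (simp add: coeff_L mult.assoc)
lemma L_sum: "L a (sum f S) = (\<Sum>i\<in>S. L a (f i))"
  using sum_comp_morphism[of "L a" f S] by (simp add: L_add o_def)
lemma T_sum: "T (sum f S) = (\<Sum>i\<in>S. T (f i))"
  using sum_comp_morphism[of "T" f S] by (simp add: T_add o_def)
lemma T_L: "T (L a r) = L (\<sigma> a) (T r) + L (\<delta> a) r"
  by (rule poly_eqI) (auto simp: coeff_T coeff_L s_mult d_mult distrib_left split: nat.split)

lemma M_N: assumes "degree p \<le> N"
  shows "M p q = (\<Sum>i\<le>N. L (coeff p i) ((T^^i) q))"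
  unfolding ore_mult_def
  by (rule sum.mono_neutral_right[symmetric]) (use assms in \<open>auto simp: coeff_eq_0\<close>)

lemma M_add_left: "M (p1 + p2) q = M p1 q + M p2 q"
proof -
  let ?N = "max (degree p1) (degree p2)"
  have "degree (p1 + p2) \<le> ?N" by (meson degree_add_le max.cobounded1 max.cobounded2)
  thus ?thesis by (simp add: M_N[of _ ?N] L_add_left sum.distrib)
qed
lemma M_0_left[simp]: "M 0 q = 0" unfolding ore_mult_def by simp
lemma M_0_right[simp]: "M p 0 = 0" unfolding ore_mult_def by simp
lemma M_add_right: "M p (q1 + q2) = M p q1 + M p q2"
  unfolding ore_mult_def by (simp add: Ti_add L_add sum.distrib)
lemma M_neg_left: "M (- p) q = - M p q"
  by (rule minus_unique[symmetric]) (simp add: M_add_left[symmetric])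
lemma M_neg_right: "M p (- q) = - M p q"
  by (rule minus_unique[symmetric]) (simp add: M_add_right[symmetric])
lemma M_diff_left: "M (p1 - p2) q = M p1 q - M p2 q"
  using M_add_left[of p1 "-p2" q] by (simp add: M_neg_left)
lemma M_diff_right: "M p (q1 - q2) = M p q1 - M p q2"
  using M_add_right[of p q1 "-q2"] by (simp add: M_neg_right)
lemma M_sum_left: "M (sum f S) q = (\<Sum>i\<in>S. M (f i) q)"
  using sum_comp_morphism[of "\<lambda>p. M p q" f S] by (simp add: M_add_left o_def)

lemma M_L: "M (L a p) q = L a (M p q)"
proof -
  have "degree (L a p) \<le> degree p" by (rule degree_le) (simp add: coeff_L coeff_eq_0)
  hence "M (L a p) q = (\<Sum>i\<le>degree p. L (coeff (L a p) i) ((T^^i) q))" by (rule M_N)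
  thus ?thesis by (simp add: ore_mult_def L_sum coeff_L L_L)
qed

lemma M_T: "M (T p) q = T (M p q)"
proof -
  let ?N = "degree p"
  have dg: "degree (T p) \<le> Suc ?N"
    by (rule degree_le) (auto simp: coeff_T coeff_eq_0 split: nat.split)
  have "M (T p) q = (\<Sum>i\<le>Suc ?N. L (coeff (T p) i) ((T^^i) q))" by (rule M_N[OF dg])
  also have "\<dots> = (\<Sum>i\<le>Suc ?N. L (case i of 0 \<Rightarrow> 0 | Suc m \<Rightarrow> \<sigma> (coeff p m)) ((T^^i) q))
       + (\<Sum>i\<le>Suc ?N. L (\<delta> (coeff p i)) ((T^^i) q))"
    by (simp add: coeff_T L_add_left sum.distrib)
  also have "(\<Sum>i\<le>Suc ?N. L (case i of 0 \<Rightarrow> 0 | Suc m \<Rightarrow> \<sigma> (coeff p m)) ((T^^i) q))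
       = (\<Sum>i\<le>?N. L (\<sigma> (coeff p i)) ((T^^Suc i) q))"
    by (subst sum.atMost_Suc_shift) simp
  also have "(\<Sum>i\<le>Suc ?N. L (\<delta> (coeff p i)) ((T^^i) q)) = (\<Sum>i\<le>?N. L (\<delta> (coeff p i)) ((T^^i) q))"
    by (simp add: coeff_eq_0)
  also have "T (M p q) = (\<Sum>i\<le>?N. L (\<sigma> (coeff p i)) ((T^^Suc i) q)) + (\<Sum>i\<le>?N. L (\<delta> (coeff p i)) ((T^^i) q))"
    unfolding ore_mult_def by (simp add: T_sum T_L sum.distrib)
  ultimately show ?thesis by simp
qed

lemma M_Ti: "M ((T^^i) p) q = (T^^i) (M p q)"
  by (induction i) (auto simp: M_T)

lemma M_assoc: "M (M p q) r = M p (M q r)"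
proof -
  have "M (M p q) r = (\<Sum>i\<le>degree p. M (L (coeff p i) ((T^^i) q)) r)"
    unfolding ore_mult_def[of _ _ p q] by (rule M_sum_left)
  also have "\<dots> = M p (M q r)"
    unfolding ore_mult_def[of _ _ p "M q r"] by (simp add: M_L M_Ti)
  finally show ?thesis .
qed


lemma Ti_q: "coeff ((T^^i) [:-x,1:]) (Suc i) = 1 \<and> (\<forall>j > Suc i. coeff ((T^^i) [:-x,1:]) j = 0)"
proof (induction i)
  case 0
  have "coeff [:-x,1:] j = 0" if "j > Suc 0" for j
    using that by (auto simp: coeff_pCons split: nat.split)
  then show ?case by simp
next
  case (Suc i)
  let ?r = "(T^^i) [:-x,1:]"
  have 1: "coeff ?r (Suc i) = 1" and 2: "\<And>j. j > Suc i \<Longrightarrow> coeff ?r j = 0" using Suc by auto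
  have "coeff (T ?r) (Suc (Suc i)) = 1" unfolding coeff_T using 1 2[of "Suc (Suc i)"] by (simp add: s_1)
  moreover have "coeff (T ?r) j = 0" if "j > Suc (Suc i)" for j
  proof -
    obtain m where m: "j = Suc m" "m > Suc i" using \<open>j > Suc (Suc i)\<close> by (cases j) auto
    show ?thesis unfolding coeff_T m(1) using 2[of m] 2[of "Suc m"] m(2) by simp
  qed
  ultimately show ?case by simp
qed

lemma Ti_1: "coeff ((T^^i) [:1:]) n = (if n = i then 1 else 0)"
proof (induction i arbitrary: n)
  case 0
  then show ?case by (cases n) auto
next
  case (Suc i)
  show ?case
  proof (cases n)
    case 0 then show ?thesis using Suc.IH[of 0] by (cases "i = 0") (simp_all add: d_1 coeff_T)
  next
    case (Suc m) then show ?thesis using Suc.IH[of m] Suc.IH[of n]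
      by (cases "m = i"; cases "n = i") (simp_all add: s_1 d_1 coeff_T)
  qed
qed

lemma coeff_M: "coeff (M r q) n = (\<Sum>i\<le>degree r. coeff r i * coeff ((T^^i) q) n)"
  unfolding ore_mult_def by (simp add: coeff_sum coeff_L)

lemma M_1_right[simp]: "M p [:1:] = p"
proof (rule poly_eqI)
  fix n
  have "coeff (M p [:1:]) n = (\<Sum>i\<le>degree p. if i = n then coeff p n else 0)"
    unfolding coeff_M by (rule sum.cong) (auto simp: Ti_1)
  also have "\<dots> = coeff p n" by (auto simp: coeff_eq_0)
  finally show "coeff (M p [:1:]) n = coeff p n" .
qed

lemma M_const: "M [:c:] p = L c p"
  unfolding ore_mult_def by simp

lemma M_1_left[simp]: "M [:1:] p = p"
  using M_const[of 1 p] by simp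

lemma M_const_const: "M [:c:] [:d:] = [:c * d:]"
  unfolding M_const by (rule poly_eqI) (simp add: coeff_L coeff_pCons split: nat.split)

lemma M_monom: "M (monom a k) q = L a ((T^^k) q)"
proof -
  have "M (monom a k) q = (\<Sum>i\<le>k. L (coeff (monom a k) i) ((T^^i) q))"
    by (rule M_N) (simp add: degree_monom_le)
  also have "\<dots> = (\<Sum>i\<le>k. if i = k then L a ((T^^k) q) else 0)"
    by (rule sum.cong) (auto simp: coeff_monom)
  finally show ?thesis by simp
qed

lemma coeff_Mq: "coeff (M r [:-x,1:]) (Suc (degree r)) = lead_coeff r"
proof -
  have "coeff (M r [:-x,1:]) (Suc (degree r)) = (\<Sum>i\<le>degree r. if i = degree r then lead_coeff r else 0)"
    unfolding coeff_M
  proof (rule sum.cong)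
    fix i assume "i \<in> {..degree r}"
    thus "coeff r i * coeff ((T ^^ i) [:- x, 1:]) (Suc (degree r)) = (if i = degree r then lead_coeff r else 0)"
      using Ti_q[of i x] by auto
  qed simp
  thus ?thesis by simp
qed

lemma const_in: assumes "[:c:] = M r [:-x,1:]" shows "c = 0"
proof (cases "r = 0")
  case True thus ?thesis using assms by simp
next
  case False
  have "coeff (M r [:-x,1:]) (Suc (degree r)) = lead_coeff r" by (rule coeff_Mq)
  hence "coeff [:c:] (Suc (degree r)) = lead_coeff r" by (simp only: assms)
  hence "lead_coeff r = 0" by simp
  thus ?thesis using False by simp
qed

lemma div_exists: "\<exists>r c. h = M r [:-x,1:] + [:c:]"
proof (induction "degree h" arbitrary: h rule: less_induct)
  case less
  show ?case
  proof (cases "degree h = 0")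
    case True
    hence "h = M 0 [:-x,1:] + [:coeff h 0:]" by (simp add: degree_0_id)
    thus ?thesis by blast
  next
    case False
    define n where "n = degree h"
    define k where "k = n - 1"
    define a where "a = lead_coeff h"
    have nk: "n = Suc k" using False unfolding n_def k_def by simp
    define m where "m = M (monom a k) [:-x,1:]"
    define h' where "h' = h - m"
    have m1: "coeff m n = a" unfolding m_def M_monom coeff_L nk using Ti_q[of k x] by simp
    have m2: "coeff m j = 0" if "j > n" for j
      unfolding m_def M_monom coeff_L using Ti_q[of k x] that nk by simp
    have "degree h' \<le> k"
    proof (rule degree_le, intro allI impI)
      fix j assume "k < j"
      hence "j = n \<or> j > n" using nk by auto
      thus "coeff h' j = 0"
      proof
        assume "j = n" thus ?thesis unfolding h'_def coeff_diff using m1 by (simp add: a_def n_def)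
      next
        assume "j > n" thus ?thesis unfolding h'_def coeff_diff using m2[of j]
          by (simp add: n_def coeff_eq_0)
      qed
    qed
    hence "degree h' < degree h" using nk n_def by simp
    then obtain r c where rc: "h' = M r [:-x,1:] + [:c:]" using less by blast
    have "h = h' + m" unfolding h'_def by simp
    also have "\<dots> = M (r + monom a k) [:-x,1:] + [:c:]" unfolding rc m_def M_add_left by simp
    finally show ?thesis by blast
  qed
qed

lemma LI_iff: "p \<in> LI f \<longleftrightarrow> (\<exists>r. p = M r f)"
  unfolding left_ideal_def by auto

lemma LI_add: "p \<in> LI f \<Longrightarrow> q \<in> LI f \<Longrightarrow> p + q \<in> LI f"
  unfolding LI_iff by (metis M_add_left)
lemma LI_diff: "p \<in> LI f \<Longrightarrow> q \<in> LI f \<Longrightarrow> p - q \<in> LI f"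
  unfolding LI_iff by (metis M_diff_left)
lemma LI_mult: "p \<in> LI f \<Longrightarrow> M r p \<in> LI f"
  unfolding LI_iff by (metis M_assoc)
lemma LI_self: "f \<in> LI f"
  unfolding LI_iff by (metis M_1_left)
lemma LI_0: "0 \<in> LI f"
  unfolding LI_iff by (metis M_0_left)
lemma LI_sub: "f \<in> LI k \<Longrightarrow> p \<in> LI f \<Longrightarrow> p \<in> LI k"
  unfolding LI_iff by (metis M_assoc)

lemma coset_eq: "coset h1 (LI f) = coset h2 (LI f) \<longleftrightarrow> h1 - h2 \<in> LI f"
proof
  assume "coset h1 (LI f) = coset h2 (LI f)"
  moreover have "h1 \<in> coset h1 (LI f)" unfolding coset_def using LI_0 by force
  ultimately obtain r where "h1 = h2 + r" "r \<in> LI f" unfolding coset_def by auto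
  thus "h1 - h2 \<in> LI f" by simp
next
  assume a: "h1 - h2 \<in> LI f"
  show "coset h1 (LI f) = coset h2 (LI f)"
  proof (rule set_eqI)
    fix z
    have "(\<exists>r. z = h1 + r \<and> r \<in> LI f) \<longleftrightarrow> (\<exists>r. z = h2 + r \<and> r \<in> LI f)"
    proof
      assume "\<exists>r. z = h1 + r \<and> r \<in> LI f"
      then obtain r where "z = h1 + r" "r \<in> LI f" by blast
      thus "\<exists>r. z = h2 + r \<and> r \<in> LI f"
        using LI_add[OF a, of r] by (intro exI[of _ "h1 - h2 + r"]) auto
    next
      assume "\<exists>r. z = h2 + r \<and> r \<in> LI f"
      then obtain r where "z = h2 + r" "r \<in> LI f" by blast
      thus "\<exists>r. z = h1 + r \<and> r \<in> LI f"
        using LI_diff[OF \<open>r \<in> LI f\<close> a] by (intro exI[of _ "r - (h1 - h2)"]) auto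
    qed
    thus "z \<in> coset h1 (LI f) \<longleftrightarrow> z \<in> coset h2 (LI f)" unfolding coset_def by auto
  qed
qed

lemma uniq: "h - [:y1:] \<in> LI [:-x,1:] \<Longrightarrow> h - [:y2:] \<in> LI [:-x,1:] \<Longrightarrow> y1 = y2"
proof -
  assume a: "h - [:y1:] \<in> LI [:-x,1:]" "h - [:y2:] \<in> LI [:-x,1:]"
  have "(h - [:y1:]) - (h - [:y2:]) \<in> LI [:-x,1:]" by (rule LI_diff[OF a])
  moreover have "(h - [:y1:]) - (h - [:y2:]) = [:y2 - y1:]" by simp
  ultimately obtain r where "[:y2 - y1:] = M r [:-x,1:]" unfolding LI_iff by auto
  thus "y1 = y2" using const_in by fastforce
qed

lemma EV_ex: "h - [:ore_eval \<sigma> \<delta> h x:] \<in> LI [:-x,1:]"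
proof -
  obtain r c where rc: "h = M r [:-x,1:] + [:c:]" using div_exists by blast
  have ex: "h - [:c:] \<in> LI [:-x,1:]" unfolding LI_iff using rc by auto
  have "\<exists>!y. h - [:y:] \<in> LI [:-x,1:]" using ex uniq by blast
  thus ?thesis unfolding ore_eval_def by (rule theI')
qed

lemma EV_eq: "h - [:y:] \<in> LI [:-x,1:] \<Longrightarrow> ore_eval \<sigma> \<delta> h x = y"
  using EV_ex uniq by blast

lemma root_iff: "ore_eval \<sigma> \<delta> h x = 0 \<longleftrightarrow> h \<in> LI [:-x,1:]"
  using EV_ex[of h x] EV_eq[of h 0 x] by auto

lemma M_lin: "M [:-y,1:] p = L (-y) p + T p"
  unfolding ore_mult_def by (simp add: atMost_Suc)

lemma conj_M: assumes "c \<noteq> 0"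
  shows "M [:- ore_conj \<sigma> \<delta> x c, 1:] [:c:] = M [:\<sigma> c:] [:-x,1:]"
proof -
  have e: "ore_conj \<sigma> \<delta> x c * c = \<sigma> c * x + \<delta> c"
    unfolding ore_conj_def using assms by (simp add: distrib_right mult.assoc)
  show ?thesis unfolding M_lin M_const
    by (rule poly_eqI) (auto simp: coeff_L coeff_T coeff_pCons e split: nat.split)
qed

lemma inv_cancel: "b \<noteq> 0 \<Longrightarrow> b * (inverse b * (z::'a)) = z"
  by (simp add: mult.assoc[symmetric])

lemma conj_comp: assumes "a \<noteq> 0" "b \<noteq> 0"
  shows "ore_conj \<sigma> \<delta> (ore_conj \<sigma> \<delta> x b) a = ore_conj \<sigma> \<delta> x (a * b)"
  unfolding ore_conj_def using assms
  by (simp add: s_mult d_mult nonzero_inverse_mult_distrib distrib_left distrib_right mult.assoc inv_cancel)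

lemma conj_1: "ore_conj \<sigma> \<delta> x 1 = x"
  unfolding ore_conj_def by (simp add: s_1 d_1)


lemma lemA: assumes "[:1:] - M h g \<in> LI [:-x,1:]" shows "ore_eval \<sigma> \<delta> g x \<noteq> 0"
proof
  assume "ore_eval \<sigma> \<delta> g x = 0"
  hence "g \<in> LI [:-x,1:]" using root_iff by blast
  hence "M h g \<in> LI [:-x,1:]" by (rule LI_mult)
  hence "([:1:] - M h g) + M h g \<in> LI [:-x,1:]" using assms LI_add by blast
  hence "[:1:] - [:0:] \<in> LI [:-x,1:]" by simp
  moreover have "[:1:] - [:1:] \<in> LI [:-x,1:]" using LI_0 by simp
  ultimately have "(0::'a) = 1" by (rule uniq)
  thus False by simp
qed

lemma lemB: assumes "M f' g \<in> LI [:-x,1:]" "ore_eval \<sigma> \<delta> g x = c" "c \<noteq> 0"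
  shows "ore_eval \<sigma> \<delta> f' (ore_conj \<sigma> \<delta> x c) = 0"
proof -
  define y where "y = ore_conj \<sigma> \<delta> x c"
  define d where "d = ore_eval \<sigma> \<delta> f' y"
  obtain p where p: "f' - [:d:] = M p [:-y,1:]" using EV_ex[of f' y] unfolding LI_iff d_def by blast
  obtain s where s: "g - [:c:] = M s [:-x,1:]" using EV_ex[of g x] unfolding LI_iff assms(2) by blast
  have f': "f' = M p [:-y,1:] + [:d:]" using p by (simp add: algebra_simps)
  have g: "g = M s [:-x,1:] + [:c:]" using s by (simp add: algebra_simps)
  have "M [:-y,1:] g = M (M [:-y,1:] s) [:-x,1:] + M [:\<sigma> c:] [:-x,1:]"
    unfolding y_def using conj_M[OF assms(3), of x] by (subst g) (simp add: M_add_right M_assoc)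
  hence qg: "M [:-y,1:] g \<in> LI [:-x,1:]" unfolding LI_iff by (metis M_add_left)
  have "M f' g = M p (M [:-y,1:] g) + (M (M [:d:] s) [:-x,1:] + [:d*c:])"
    apply (subst f')
    apply (simp only: M_add_left M_assoc)
    apply (subst (2) g)
    apply (simp add: M_add_right M_assoc M_const_const)
    done
  hence "M f' g - [:d*c:] = M p (M [:-y,1:] g) + M (M [:d:] s) [:-x,1:]" by simp
  hence "M f' g - [:d*c:] \<in> LI [:-x,1:]"
    using LI_add[OF LI_mult[OF qg] LI_mult[OF LI_self]] by simp
  moreover have "M f' g - [:0:] \<in> LI [:-x,1:]" using assms(1) by simp
  ultimately have "d * c = 0" by (rule uniq)
  hence "d = 0" using assms(3) by simp
  thus ?thesis unfolding d_def y_def .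
qed

lemma lemC: assumes "ore_eval \<sigma> \<delta> h0 y = c'" "c' \<noteq> 0" "M g h0 - [:1:] \<in> LI [:-y,1:]"
  shows "ore_eval \<sigma> \<delta> g (ore_conj \<sigma> \<delta> y c') * c' = 1"
proof -
  define x where "x = ore_conj \<sigma> \<delta> y c'"
  define c where "c = ore_eval \<sigma> \<delta> g x"
  obtain p where p: "g - [:c:] = M p [:-x,1:]" using EV_ex[of g x] unfolding LI_iff c_def by blast
  obtain s where s: "h0 - [:c':] = M s [:-y,1:]" using EV_ex[of h0 y] unfolding LI_iff assms(1) by blast
  have g: "g = M p [:-x,1:] + [:c:]" using p by (simp add: algebra_simps)
  have h0: "h0 = M s [:-y,1:] + [:c':]" using s by (simp add: algebra_simps)
  have "M [:-x,1:] h0 = M (M [:-x,1:] s) [:-y,1:] + M [:\<sigma> c':] [:-y,1:]"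
    unfolding x_def using conj_M[OF assms(2), of y] by (subst h0) (simp add: M_add_right M_assoc)
  hence qh: "M [:-x,1:] h0 \<in> LI [:-y,1:]" unfolding LI_iff by (metis M_add_left)
  have "M g h0 = M p (M [:-x,1:] h0) + (M (M [:c:] s) [:-y,1:] + [:c*c':])"
    apply (subst g)
    apply (simp only: M_add_left M_assoc)
    apply (subst (2) h0)
    apply (simp add: M_add_right M_assoc M_const_const)
    done
  hence "M g h0 - [:c*c':] = M p (M [:-x,1:] h0) + M (M [:c:] s) [:-y,1:]" by simp
  hence "M g h0 - [:c*c':] \<in> LI [:-y,1:]"
    using LI_add[OF LI_mult[OF qh] LI_mult[OF LI_self]] by simp
  hence "c * c' = 1" using uniq assms(3) by blast
  thus ?thesis unfolding c_def x_def .
qed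

end

theorem corollary1p17:
  fixes \<sigma> \<delta> :: "'a::division_ring \<Rightarrow> 'a" and f f' g :: "'a poly"
  assumes "ring_endo \<sigma>"
    and "sigma_derivation \<sigma> \<delta>"
    and "induced_iso \<sigma> \<delta> f f' g"
  shows "(\<forall>x \<in> right_roots \<sigma> \<delta> f. ore_eval \<sigma> \<delta> g x \<noteq> 0) \<and>
         right_roots \<sigma> \<delta> f' = ore_phi \<sigma> \<delta> g ` right_roots \<sigma> \<delta> f"
proof -
  interpret ore \<sigma> \<delta> using assms(1,2) by unfold_locales
  have wd: "\<And>h1 h2. h1 - h2 \<in> LI f' \<Longrightarrow> M h1 g - M h2 g \<in> LI f"
    and inj: "\<And>h1 h2. M h1 g - M h2 g \<in> LI f \<Longrightarrow> h1 - h2 \<in> LI f'"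
    and surj: "\<And>k. \<exists>h. M h g - k \<in> LI f"
    using assms(3) unfolding induced_iso_def coset_eq by blast+
  obtain h0 where h0: "M h0 g - [:1:] \<in> LI f" using surj by blast
  have neg: "[:1:] - M h0 g \<in> LI f" using LI_diff[OF LI_0 h0] by simp
  have P1: "ore_eval \<sigma> \<delta> g x \<noteq> 0" if "x \<in> right_roots \<sigma> \<delta> f" for x
  proof -
    have "f \<in> LI [:-x,1:]" using that root_iff unfolding right_roots_def by blast
    thus ?thesis using lemA LI_sub neg by blast
  qed
  have P2: "ore_phi \<sigma> \<delta> g x \<in> right_roots \<sigma> \<delta> f'" if x: "x \<in> right_roots \<sigma> \<delta> f" for x
  proof -
    have fx: "f \<in> LI [:-x,1:]" using that root_iff unfolding right_roots_def by blast
    have "M f' g - M 0 g \<in> LI f" by (rule wd) (simp add: LI_self)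
    hence "M f' g \<in> LI [:-x,1:]" using LI_sub[OF fx] by simp
    thus ?thesis unfolding right_roots_def ore_phi_def using lemB P1[OF x] by blast
  qed
  have P3: "y \<in> ore_phi \<sigma> \<delta> g ` right_roots \<sigma> \<delta> f" if y: "y \<in> right_roots \<sigma> \<delta> f'" for y
  proof -
    have fy: "f' \<in> LI [:-y,1:]" using that root_iff unfolding right_roots_def by blast
    have "M (M g h0) g - M [:1:] g = M g (M h0 g - [:1:])" by (simp add: M_assoc M_diff_right)
    hence "M (M g h0) g - M [:1:] g \<in> LI f" using LI_mult[OF h0] by simp
    hence gh: "M g h0 - [:1:] \<in> LI [:-y,1:]" using inj LI_sub[OF fy] by blast
    have "[:1:] - M g h0 \<in> LI [:-y,1:]" using LI_diff[OF LI_0 gh] by simp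
    hence c'0: "ore_eval \<sigma> \<delta> h0 y \<noteq> 0" by (rule lemA)
    define c' where "c' = ore_eval \<sigma> \<delta> h0 y"
    define x where "x = ore_conj \<sigma> \<delta> y c'"
    have "M (M f h0) g - M 0 g = M f (M h0 g - [:1:]) + M f [:1:]"
      by (simp add: M_assoc M_diff_right)
    hence "M (M f h0) g - M 0 g \<in> LI f" using LI_add[OF LI_mult[OF h0, of f] LI_self[of f]] by simp
    hence "M f h0 \<in> LI [:-y,1:]" using inj[of "M f h0" 0] LI_sub[OF fy] by simp
    hence "ore_eval \<sigma> \<delta> f x = 0" unfolding x_def using lemB c'0 c'_def by blast
    hence xr: "x \<in> right_roots \<sigma> \<delta> f" unfolding right_roots_def by simp
    have e: "ore_eval \<sigma> \<delta> g x * c' = 1" unfolding x_def using lemC c'0 c'_def gh by blast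
    hence "ore_eval \<sigma> \<delta> g x \<noteq> 0" by auto
    hence "ore_phi \<sigma> \<delta> g x = y"
      unfolding ore_phi_def x_def using conj_comp[of "ore_eval \<sigma> \<delta> g x" c' y] e c'0 c'_def x_def conj_1
      by simp
    thus ?thesis using xr by blast
  qed
  show ?thesis using P1 P2 P3 by blast
qed

end
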